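(* Let $k\ge2$ be an integer, $\sigma>0$, $\beta_*(\lambda),\beta_n(\lambda)$ real numbers with $g(\lambda):=k\beta_*(\lambda)-\beta_n(\lambda)>0$, and set $\sigma_*(\lambda)=\frac{\sqrt{2g(\lambda)}}{k-1}$, $\sigma_\#(\lambda)=\frac{\sqrt{g(\lambda)}}{k-1}$. Let $$M_n(\omega,\lambda)=\int_{-\infty}^0e^{g(\lambda)s+\sigma(k-1)W_s(\omega)}ds .$$ Then: (i) $\mathbb E(M_n(\cdot,\lambda))$ exists iff $\sigma<\sigma_*$, in which case $\mathbb E(M_n(\cdot,\lambda))=\frac1{g(\lambda)-(k-1)^2\sigma^2/2}$. (ii) $\mathrm{Var}(M_n(\cdot,\lambda))$ exists iff $\sigma<\sigma_\#$, in which case $$\mathrm{Var}(M_n(\cdot,\lambda))=\frac{(k-1)^2\sigma^2}{2(g(\lambda)-(k-1)^2\sigma^2/2)^2(g(\lambda)-(k-1)^2\sigma^2)}.$$ (iii) The autocorrelation of $M_n(\theta_t\cdot,\lambda)$ exists iff $\sigma<\sigma_\#$, in which case for $0<\sigma<\sigma_\#$ and all $t\in\mathbb R$ $$R(t):=\frac{\mathrm{Cov}(M_n(\theta_{s+t}\cdot,\lambda),M_n(\theta_s\cdot,\lambda))}{\mathrm{Var}(M_n(\cdot,\lambda))}=\exp\Big(-\big(g(\lambda)-(k-1)^2\sigma^2/2\big)|t|\Big).$$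
   Context: $(\Omega,\mathcal F,\mathbb P)$ is the canonical two-sided Wiener space (continuous paths $\omega$ with $\omega(0)=0$, Wiener measure), restricted to a $\theta$-invariant full-measure subset on which $W_t(\omega)/t\to0$ as $t\to\pm\infty$; $W_t(\omega)=\omega(t)$ is a two-sided standard Brownian motion and $\theta_t\omega(\cdot)=\omega(\cdot+t)-\omega(t)$. $\mathrm{Cov}(X,Y)=\mathbb E(XY)-\mathbb E(X)\mathbb E(Y)$. *)

theory Defs
  imports "HOL-Probability.Probability"
begin

definition two_sided_BM :: "'a measure \<Rightarrow> (real \<Rightarrow> 'a \<Rightarrow> real) \<Rightarrow> bool" where
  "two_sided_BM M W \<longleftrightarrow>
     prob_space M \<and>
     (\<forall>t. W t \<in> borel_measurable M) \<and>
     (\<forall>\<omega>\<in>space M. W 0 \<omega> = 0 \<and> continuous_on UNIV (\<lambda>t. W t \<omega>)) \<and>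
     (\<forall>s t. s < t \<longrightarrow>
        distributed M lborel (\<lambda>\<omega>. W t \<omega> - W s \<omega>) (\<lambda>x. ennreal (normal_density 0 (sqrt (t - s)) x))) \<and>
     (\<forall>ts::real list. sorted_wrt (<) ts \<longrightarrow>
        prob_space.indep_vars M (\<lambda>_. borel) (\<lambda>i \<omega>. W (ts ! Suc i) \<omega> - W (ts ! i) \<omega>) {..<length ts - 1})"

text \<open>M_n(omega) = integral over (-infinity,0] of exp(g s + c W_s(omega)), with c = sigma (k-1).\<close>
definition Mn :: "(real \<Rightarrow> 'a \<Rightarrow> real) \<Rightarrow> real \<Rightarrow> real \<Rightarrow> 'a \<Rightarrow> real" where
  "Mn W g c \<omega> = (LINT s:{..0}|lborel. exp (g * s + c * W s \<omega>))"

definition Var :: "'a measure \<Rightarrow> ('a \<Rightarrow> real) \<Rightarrow> real" where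
  "Var M X = (\<integral>\<omega>. (X \<omega> - (\<integral>\<omega>. X \<omega> \<partial>M))\<^sup>2 \<partial>M)"

definition Cov :: "'a measure \<Rightarrow> ('a \<Rightarrow> real) \<Rightarrow> ('a \<Rightarrow> real) \<Rightarrow> real" where
  "Cov M X Y = (\<integral>\<omega>. X \<omega> * Y \<omega> \<partial>M) - (\<integral>\<omega>. X \<omega> \<partial>M) * (\<integral>\<omega>. Y \<omega> \<partial>M)"

end

theory Submission
  imports Defs
begin

lemma normal_mgf:
  fixes \<sigma> \<alpha> :: real assumes "\<sigma> > 0"
  shows "(\<integral>\<^sup>+x. ennreal (normal_density 0 \<sigma> x) * ennreal (exp (\<alpha> * x)) \<partial>lborel) = ennreal (exp (\<alpha>\<^sup>2 * \<sigma>\<^sup>2 / 2))"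
proof -
  have eq: "normal_density 0 \<sigma> x * exp (\<alpha> * x) = exp (\<alpha>\<^sup>2 * \<sigma>\<^sup>2 / 2) * normal_density (\<alpha> * \<sigma>\<^sup>2) \<sigma> x" for x
  proof -
    have "- ((x - 0)\<^sup>2 / (2 * \<sigma>\<^sup>2)) + \<alpha> * x = \<alpha>\<^sup>2 * \<sigma>\<^sup>2 / 2 + - ((x - \<alpha> * \<sigma>\<^sup>2)\<^sup>2 / (2 * \<sigma>\<^sup>2))"
      using assms by (simp add: field_simps power2_eq_square)
    then show ?thesis unfolding normal_density_def
      by (simp add: exp_add[symmetric] mult.commute mult.left_commute)
  qed
  have "(\<integral>\<^sup>+x. ennreal (normal_density 0 \<sigma> x) * ennreal (exp (\<alpha> * x)) \<partial>lborel)
      = (\<integral>\<^sup>+x. ennreal (exp (\<alpha>\<^sup>2 * \<sigma>\<^sup>2 / 2)) * ennreal (normal_density (\<alpha> * \<sigma>\<^sup>2) \<sigma> x) \<partial>lborel)"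
    by (intro nn_integral_cong) (simp add: ennreal_mult'[symmetric] eq normal_density_nonneg)
  also have "\<dots> = ennreal (exp (\<alpha>\<^sup>2 * \<sigma>\<^sup>2 / 2)) * (\<integral>\<^sup>+x. ennreal (normal_density (\<alpha> * \<sigma>\<^sup>2) \<sigma> x) \<partial>lborel)"
    by (simp add: nn_integral_cmult)
  also have "(\<integral>\<^sup>+x. ennreal (normal_density (\<alpha> * \<sigma>\<^sup>2) \<sigma> x) \<partial>lborel) = 1"
    using prob_space.emeasure_space_1[OF prob_space_normal_density[of \<sigma> "\<alpha> * \<sigma>\<^sup>2"]]
    using assms by (simp add: emeasure_density)
  finally show ?thesis by simp
qed


locale bm =
  fixes M :: "'a measure" and W :: "real \<Rightarrow> 'a \<Rightarrow> real"
  assumes BM: "two_sided_BM M W"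
begin

lemma ps: "prob_space M" using BM by (simp add: two_sided_BM_def)

sublocale prob_space M by (rule ps)

lemma W_meas[measurable]: "W t \<in> borel_measurable M" using BM by (simp add: two_sided_BM_def)
lemma W0: "\<omega> \<in> space M \<Longrightarrow> W 0 \<omega> = 0" using BM by (simp add: two_sided_BM_def)
lemma Wcont: "\<omega> \<in> space M \<Longrightarrow> continuous_on UNIV (\<lambda>t. W t \<omega>)" using BM by (simp add: two_sided_BM_def)
lemma Wdist: "s < t \<Longrightarrow> distributed M lborel (\<lambda>\<omega>. W t \<omega> - W s \<omega>) (\<lambda>x. ennreal (normal_density 0 (sqrt (t - s)) x))"
  using BM by (simp add: two_sided_BM_def)
lemma Windep: "sorted_wrt (<) ts \<Longrightarrow> indep_vars (\<lambda>_. borel) (\<lambda>i \<omega>. W (ts ! Suc i) \<omega> - W (ts ! i) \<omega>) {..<length ts - 1}"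
  using BM by (simp add: two_sided_BM_def)

lemma incr:
  assumes "p \<le> q"
  shows "(\<integral>\<^sup>+\<omega>. ennreal (exp (\<alpha> * (W q \<omega> - W p \<omega>))) \<partial>M) = ennreal (exp (\<alpha>\<^sup>2 * (q - p) / 2))"
proof (cases "p = q")
  case True then show ?thesis by (simp add: emeasure_space_1)
next
  case False
  then have pq: "p < q" using assms by simp
  have "(\<integral>\<^sup>+\<omega>. ennreal (exp (\<alpha> * (W q \<omega> - W p \<omega>))) \<partial>M)
      = (\<integral>\<^sup>+x. ennreal (normal_density 0 (sqrt (q - p)) x) * ennreal (exp (\<alpha> * x)) \<partial>lborel)"
    by (rule distributed_nn_integral[OF Wdist[OF pq], symmetric]) simp
  also have "\<dots> = ennreal (exp (\<alpha>\<^sup>2 * (sqrt (q - p))\<^sup>2 / 2))"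
    by (rule normal_mgf) (use pq in simp)
  finally show ?thesis using pq by simp
qed

lemma incr_prod:
  assumes "sorted_wrt (<) ts"
  shows "(\<integral>\<^sup>+\<omega>. (\<Prod>i<length ts - 1. ennreal (exp (\<alpha> i * (W (ts ! Suc i) \<omega> - W (ts ! i) \<omega>)))) \<partial>M)
     = (\<Prod>i<length ts - 1. ennreal (exp ((\<alpha> i)\<^sup>2 * (ts ! Suc i - ts ! i) / 2)))"
proof -
  have ind: "indep_vars (\<lambda>_. borel) (\<lambda>i \<omega>. ennreal (exp (\<alpha> i * (W (ts ! Suc i) \<omega> - W (ts ! i) \<omega>)))) {..<length ts - 1}"
    by (rule indep_vars_compose2[OF Windep[OF assms], where Y="\<lambda>i x. ennreal (exp (\<alpha> i * x))"]) simp
  have "(\<integral>\<^sup>+\<omega>. (\<Prod>i<length ts - 1. ennreal (exp (\<alpha> i * (W (ts ! Suc i) \<omega> - W (ts ! i) \<omega>)))) \<partial>M)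
     = (\<Prod>i<length ts - 1. \<integral>\<^sup>+\<omega>. ennreal (exp (\<alpha> i * (W (ts ! Suc i) \<omega> - W (ts ! i) \<omega>))) \<partial>M)"
    by (rule indep_vars_nn_integral[OF _ ind]) auto
  also have "\<dots> = (\<Prod>i<length ts - 1. ennreal (exp ((\<alpha> i)\<^sup>2 * (ts ! Suc i - ts ! i) / 2)))"
  proof (rule prod.cong[OF refl])
    fix i assume "i \<in> {..<length ts - 1}"
    then have "ts ! i < ts ! Suc i" using assms sorted_wrt_nth_less[OF assms, of i "Suc i"] by simp
    then show "(\<integral>\<^sup>+\<omega>. ennreal (exp (\<alpha> i * (W (ts ! Suc i) \<omega> - W (ts ! i) \<omega>))) \<partial>M) = ennreal (exp ((\<alpha> i)\<^sup>2 * (ts ! Suc i - ts ! i) / 2))"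
      by (intro incr) simp
  qed
  finally show ?thesis .
qed

lemma ennreal_exp_add: "ennreal (exp (x + y)) = ennreal (exp x) * ennreal (exp y)"
  by (simp add: exp_add ennreal_mult)

lemma incr2:
  assumes "p0 \<le> p1" "p1 \<le> p2"
  shows "(\<integral>\<^sup>+\<omega>. ennreal (exp (a1 * (W p1 \<omega> - W p0 \<omega>) + a2 * (W p2 \<omega> - W p1 \<omega>))) \<partial>M)
     = ennreal (exp ((a1\<^sup>2 * (p1 - p0) + a2\<^sup>2 * (p2 - p1)) / 2))"
proof -
  consider "p0 = p1" | "p1 = p2" | "p0 < p1 \<and> p1 < p2" using assms by linarith
  then show ?thesis
  proof cases
    case 1 then show ?thesis using incr[of p1 p2 a2] assms by simp
  next
    case 2 then show ?thesis using incr[of p0 p1 a1] assms by simp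
  next
    case 3
    define \<alpha> where "\<alpha> = (\<lambda>i::nat. if i = 0 then a1 else a2)"
    have "sorted_wrt (<) [p0, p1, p2]" using 3 by simp
    from incr_prod[OF this, of \<alpha>] show ?thesis
      by (simp add: numeral_2_eq_2 \<alpha>_def ennreal_exp_add[symmetric] add_divide_distrib)
  qed
qed

lemma incr3:
  assumes "p0 \<le> p1" "p1 \<le> p2" "p2 \<le> p3"
  shows "(\<integral>\<^sup>+\<omega>. ennreal (exp (a1 * (W p1 \<omega> - W p0 \<omega>) + a2 * (W p2 \<omega> - W p1 \<omega>) + a3 * (W p3 \<omega> - W p2 \<omega>))) \<partial>M)
     = ennreal (exp ((a1\<^sup>2 * (p1 - p0) + a2\<^sup>2 * (p2 - p1) + a3\<^sup>2 * (p3 - p2)) / 2))"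
proof -
  consider "p0 = p1" | "p1 = p2" | "p2 = p3" | "p0 < p1 \<and> p1 < p2 \<and> p2 < p3" using assms by linarith
  then show ?thesis
  proof cases
    case 1 then show ?thesis using incr2[of p1 p2 p3 a2 a3] assms by simp
  next
    case 2 then show ?thesis using incr2[of p0 p1 p3 a1 a3] assms by simp
  next
    case 3 then show ?thesis using incr2[of p0 p1 p2 a1 a2] assms by simp
  next
    case 4
    define \<alpha> where "\<alpha> = (\<lambda>i::nat. if i = 0 then a1 else if i = 1 then a2 else a3)"
    have "sorted_wrt (<) [p0, p1, p2, p3]" using 4 by simp
    from incr_prod[OF this, of \<alpha>] show ?thesis
      by (simp add: numeral_3_eq_3 \<alpha>_def ennreal_exp_add[symmetric] add_divide_distrib)
  qed
qed

end

context bm begin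

definition ov :: "real \<Rightarrow> real \<Rightarrow> real \<Rightarrow> real \<Rightarrow> real" where
  "ov l1 r1 l2 r2 = max 0 (min r1 r2 - max l1 l2)"

lemma two_int_aux:
  assumes "l1 \<le> r1" "l2 \<le> r2" "l1 \<le> l2"
  shows "(\<integral>\<^sup>+\<omega>. ennreal (exp (c * (W r1 \<omega> - W l1 \<omega>) + c * (W r2 \<omega> - W l2 \<omega>))) \<partial>M)
     = ennreal (exp (c\<^sup>2 / 2 * ((r1 - l1) + (r2 - l2) + 2 * ov l1 r1 l2 r2)))"
proof -
  consider "r1 \<le> l2" | "l2 < r1" "r1 \<le> r2" | "r2 < r1" by linarith
  then show ?thesis
  proof cases
    case 1
    have e: "c * (W r1 \<omega> - W l1 \<omega>) + c * (W r2 \<omega> - W l2 \<omega>)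
       = c * (W r1 \<omega> - W l1 \<omega>) + 0 * (W l2 \<omega> - W r1 \<omega>) + c * (W r2 \<omega> - W l2 \<omega>)" for \<omega> by simp
    have o: "ov l1 r1 l2 r2 = 0" using 1 assms by (simp add: ov_def)
    show ?thesis unfolding e o by (subst incr3) (use 1 assms in \<open>auto simp: power2_eq_square field_simps\<close>)
  next
    case 2
    have e: "c * (W r1 \<omega> - W l1 \<omega>) + c * (W r2 \<omega> - W l2 \<omega>)
       = c * (W l2 \<omega> - W l1 \<omega>) + (2*c) * (W r1 \<omega> - W l2 \<omega>) + c * (W r2 \<omega> - W r1 \<omega>)" for \<omega>
      by (simp add: algebra_simps)
    have o: "ov l1 r1 l2 r2 = r1 - l2" using 2 assms by (simp add: ov_def)
    show ?thesis unfolding e o by (subst incr3) (use 2 assms in \<open>auto simp: power2_eq_square field_simps\<close>)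
  next
    case 3
    have e: "c * (W r1 \<omega> - W l1 \<omega>) + c * (W r2 \<omega> - W l2 \<omega>)
       = c * (W l2 \<omega> - W l1 \<omega>) + (2*c) * (W r2 \<omega> - W l2 \<omega>) + c * (W r1 \<omega> - W r2 \<omega>)" for \<omega>
      by (simp add: algebra_simps)
    have o: "ov l1 r1 l2 r2 = r2 - l2" using 3 assms by (simp add: ov_def)
    show ?thesis unfolding e o by (subst incr3) (use 3 assms in \<open>auto simp: power2_eq_square field_simps\<close>)
  qed
qed

lemma two_int:
  assumes "l1 \<le> r1" "l2 \<le> r2"
  shows "(\<integral>\<^sup>+\<omega>. ennreal (exp (c * (W r1 \<omega> - W l1 \<omega>) + c * (W r2 \<omega> - W l2 \<omega>))) \<partial>M)
     = ennreal (exp (c\<^sup>2 / 2 * ((r1 - l1) + (r2 - l2) + 2 * ov l1 r1 l2 r2)))"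
proof (cases "l1 \<le> l2")
  case True then show ?thesis using two_int_aux assms by blast
next
  case False
  have "ov l1 r1 l2 r2 = ov l2 r2 l1 r1" by (simp add: ov_def min.commute max.commute)
  then show ?thesis using two_int_aux[of l2 r2 l1 r1 c] assms False
    by (simp add: add.commute add.left_commute)
qed

end

lemma E1:
  fixes p d z :: real assumes p: "p > 0"
  shows "(\<integral>\<^sup>+x. ennreal (exp (p * x + d)) * indicator {..z} x \<partial>lborel) = ennreal (exp (p * z + d) / p)"
proof -
  have "(\<integral>\<^sup>+x. ennreal (exp (p * x + d)) * indicator {..z} x \<partial>lborel)
      = ennreal \<bar>-1\<bar> * (\<integral>\<^sup>+x. ennreal (exp (p * (0 + -1 * x) + d)) * indicator {..z} (0 + -1 * x) \<partial>lborel)"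
    by (rule nn_integral_real_affine) auto
  also have "\<dots> = (\<integral>\<^sup>+x. ennreal (exp (- p * x + d)) * indicator {-z..} x \<partial>lborel)"
  proof -
    have "ennreal (exp (p * (0 + -1 * x) + d)) * indicator {..z} (0 + -1 * x) = ennreal (exp (- p * x + d)) * indicator {-z..} x" for x
      by (simp add: indicator_def)
    then show ?thesis by simp
  qed
  also have "\<dots> = 0 - (- exp (- p * (-z) + d) / p)"
  proof (rule nn_integral_FTC_atLeast)
    show "(\<lambda>x. exp (- p * x + d)) \<in> borel_measurable borel" by simp
    show "DERIV (\<lambda>x. - exp (- p * x + d) / p) x :> exp (- p * x + d)" for x
      using p by (auto intro!: derivative_eq_intros simp: field_simps)
    show "0 \<le> exp (- p * x + d)" for x by simp
    have "((\<lambda>x. exp (- p * x + d)) \<longlongrightarrow> 0) at_top"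
    proof -
      have "filterlim (\<lambda>x. p * x - d) at_top at_top"
      proof (subst filterlim_at_top, intro allI)
        fix Z show "eventually (\<lambda>x. Z \<le> p * x - d) at_top"
          unfolding eventually_at_top_linorder
          by (rule exI[of _ "(Z + d) / p"]) (use p in \<open>auto simp: field_simps\<close>)
      qed
      then have "filterlim (\<lambda>x. - (p * x - d)) at_bot at_top"
        by (simp add: filterlim_uminus_at_bot)
      from filterlim_compose[OF exp_at_bot this] show ?thesis by simp
    qed
    from tendsto_minus[OF tendsto_divide_zero[OF this, of p]]
    show "((\<lambda>x. - exp (- p * x + d) / p) \<longlongrightarrow> 0) at_top" by simp
  qed
  finally show ?thesis by simp
qed

lemma E1':
  fixes p d z :: real assumes p: "p > 0"
  shows "(\<integral>\<^sup>+x. ennreal (exp (p * x + d)) * indicator {..<z} x \<partial>lborel) = ennreal (exp (p * z + d) / p)"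
proof -
  have "AE x in lborel. x \<noteq> z" by (rule AE_lborel_singleton)
  then have "(\<integral>\<^sup>+x. ennreal (exp (p * x + d)) * indicator {..<z} x \<partial>lborel)
       = (\<integral>\<^sup>+x. ennreal (exp (p * x + d)) * indicator {..z} x \<partial>lborel)"
    by (intro nn_integral_cong_AE) (auto elim!: eventually_mono split: split_indicator)
  then show ?thesis using E1[OF p] by simp
qed

lemma E0:
  fixes p d z :: real assumes p: "p \<le> 0"
  shows "(\<integral>\<^sup>+x. ennreal (exp (p * x + d)) * indicator {..z} x \<partial>lborel) = \<infinity>"
proof -
  let ?I = "(\<integral>\<^sup>+x. ennreal (exp (p * x + d)) * indicator {..z} x \<partial>lborel)"
  have C: "exp (p * z + d) > 0" by simp
  have ge: "ennreal (exp (p * z + d) * real n) \<le> ?I" for n :: nat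
  proof -
    have "ennreal (exp (p * z + d) * real n) = (\<integral>\<^sup>+x. ennreal (exp (p * z + d)) * indicator {z - real n..z} x \<partial>lborel)"
      by (subst nn_integral_FTC_Icc[where F="\<lambda>x. exp (p * z + d) * x"]) (auto intro!: derivative_eq_intros simp: algebra_simps)
    also have "\<dots> \<le> ?I"
    proof (intro nn_integral_mono)
      fix x show "ennreal (exp (p * z + d)) * indicator {z - real n..z} x \<le> ennreal (exp (p * x + d)) * indicator {..z} x"
      proof (cases "x \<le> z")
        case True
        then have "p * z \<le> p * x" using p by (simp add: mult_left_mono_neg)
        then show ?thesis using True by (auto split: split_indicator)
      qed (auto split: split_indicator)
    qed
    finally show ?thesis .
  qed
  show ?thesis
  proof (rule ccontr)
    assume "?I \<noteq> \<infinity>"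
    then obtain r where r: "?I = ennreal r" "r \<ge> 0" by (cases ?I) auto
    obtain n :: nat where n: "r / exp (p * z + d) < real n" using reals_Archimedean2 by blast
    then have "r < exp (p * z + d) * real n" using C by (simp add: field_simps)
    moreover have "exp (p * z + d) * real n \<le> r" using ge[of n] r by (simp add: ennreal_le_iff)
    ultimately show False by simp
  qed
qed


lemma E_Icc:
  fixes p d l u :: real assumes p: "p \<noteq> 0" and lu: "l \<le> u"
  shows "(\<integral>\<^sup>+x. ennreal (exp (p * x + d)) * indicator {l..u} x \<partial>lborel) = ennreal ((exp (p * u + d) - exp (p * l + d)) / p)"
proof -
  have "(\<integral>\<^sup>+x. ennreal (exp (p * x + d)) * indicator {l..u} x \<partial>lborel) = ennreal (exp (p * u + d) / p - exp (p * l + d) / p)"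
  proof (rule nn_integral_FTC_Icc[where F="\<lambda>x. exp (p * x + d) / p"])
    show "(\<lambda>x. exp (p * x + d)) \<in> borel_measurable borel" by simp
    show "DERIV (\<lambda>x. exp (p * x + d) / p) x :> exp (p * x + d)" for x
      using p by (auto intro!: derivative_eq_intros)
  qed (use lu in auto)
  then show ?thesis by (simp add: diff_divide_distrib)
qed


lemma E1z: "p > 0 \<Longrightarrow> (\<integral>\<^sup>+x. ennreal (exp (p * x)) * indicator {..z} x \<partial>lborel) = ennreal (exp (p * z) / p)"
  using E1[of p 0 z] by simp

lemma R3_meas[measurable]:
  "(\<lambda>(x::real, y::real). ennreal (exp (a * x)) * ennreal (exp (e * y)) * indicator {..0::real} y * indicator {..<y - t} x)
     \<in> borel_measurable (lborel \<Otimes>\<^sub>M lborel)"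
proof -
  have "(\<lambda>(x::real, y::real). ennreal (exp (a * x)) * ennreal (exp (e * y)) * indicator {..0::real} y * indicator {..<y - t} x)
     = (\<lambda>p. ennreal (exp (a * fst p)) * ennreal (exp (e * snd p)) * indicator {..0::real} (snd p) * (if fst p < snd p - t then 1 else 0))"
    by (auto simp: fun_eq_iff split: split_indicator)
  also have "\<dots> \<in> borel_measurable (lborel \<Otimes>\<^sub>M lborel)" by measurable
  finally show ?thesis .
qed

lemma R3_int:
  assumes a: "a > 0"
  shows "(\<integral>\<^sup>+x. (\<integral>\<^sup>+y. ennreal (exp (a * x)) * ennreal (exp (e * y)) * indicator {..0::real} y * indicator {..<y - t} x \<partial>lborel) \<partial>lborel)
     = ennreal (1 / a) * (\<integral>\<^sup>+y. ennreal (exp ((a + e) * y + (- a * t))) * indicator {..0} y \<partial>lborel)"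
proof -
  have "(\<integral>\<^sup>+x. (\<integral>\<^sup>+y. ennreal (exp (a * x)) * ennreal (exp (e * y)) * indicator {..0::real} y * indicator {..<y - t} x \<partial>lborel) \<partial>lborel)
     = (\<integral>\<^sup>+y. (\<integral>\<^sup>+x. ennreal (exp (a * x)) * ennreal (exp (e * y)) * indicator {..0::real} y * indicator {..<y - t} x \<partial>lborel) \<partial>lborel)"
    using lborel_pair.Fubini'[OF R3_meas[of a e t]] by simp
  also have "\<dots> = (\<integral>\<^sup>+y. ennreal (1 / a) * (ennreal (exp ((a + e) * y + (- a * t))) * indicator {..0} y) \<partial>lborel)"
  proof (rule nn_integral_cong)
    fix y :: real
    have "(\<integral>\<^sup>+x. ennreal (exp (a * x)) * ennreal (exp (e * y)) * indicator {..0::real} y * indicator {..<y - t} x \<partial>lborel)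
        = (\<integral>\<^sup>+x. (ennreal (exp (a * x + 0)) * indicator {..<y - t} x) * (ennreal (exp (e * y)) * indicator {..0::real} y) \<partial>lborel)"
      by (intro nn_integral_cong) (simp add: mult_ac)
    also have "\<dots> = (\<integral>\<^sup>+x. ennreal (exp (a * x + 0)) * indicator {..<y - t} x \<partial>lborel) * (ennreal (exp (e * y)) * indicator {..0::real} y)"
      by (rule nn_integral_multc) simp
    also have "\<dots> = ennreal (exp (a * (y - t) + 0) / a) * (ennreal (exp (e * y)) * indicator {..0::real} y)"
      by (simp only: E1'[OF a])
    also have "\<dots> = ennreal (exp (a * (y - t) + 0) / a * exp (e * y)) * indicator {..0::real} y"
      using a by (subst ennreal_mult') (simp_all add: mult.assoc)
    also have "exp (a * (y - t) + 0) / a * exp (e * y) = 1 / a * exp ((a + e) * y + (- a * t))"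
      by (simp add: exp_add[symmetric] algebra_simps)
    also have "ennreal (1 / a * exp ((a + e) * y + (- a * t))) * indicator {..0::real} y = ennreal (1 / a) * (ennreal (exp ((a + e) * y + (- a * t))) * indicator {..0} y)"
      using a by (subst ennreal_mult') (simp_all add: mult.assoc)
    finally show "(\<integral>\<^sup>+x. ennreal (exp (a * x)) * ennreal (exp (e * y)) * indicator {..0::real} y * indicator {..<y - t} x \<partial>lborel)
       = ennreal (1 / a) * (ennreal (exp ((a + e) * y + (- a * t))) * indicator {..0} y)" .
  qed
  also have "\<dots> = ennreal (1 / a) * (\<integral>\<^sup>+y. ennreal (exp ((a + e) * y + (- a * t))) * indicator {..0} y \<partial>lborel)"
    by (rule nn_integral_cmult) simp
  finally show ?thesis .
qed


definition ovt :: "real \<Rightarrow> real \<Rightarrow> real \<Rightarrow> real" where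
  "ovt t x y = max 0 (min (-x-t) (-y))"


definition "R1 a t x y = ennreal (exp (a * x)) * indicator {-t..0} x * (ennreal (exp (a * y + 0)) * indicator {..0} y)" for a t x y :: real
definition "R2 a c t x y = ennreal (exp ((a - c\<^sup>2) * x - c\<^sup>2 * t)) * indicator {..<-t} x * (ennreal (exp (a * y + 0)) * indicator {..x+t} y)" for a c t x y :: real
definition "R3 a c t x y = ennreal (exp (a * x)) * ennreal (exp ((a - c\<^sup>2) * y)) * indicator {..0::real} y * indicator {..<y - t} x" for a c t x y :: real

lemma pw_J:
  fixes a c t x y :: real assumes t: "t \<ge> 0"
  shows "ennreal (exp (a*x + a*y + c\<^sup>2 * ovt t x y)) * indicator {..0} x * indicator {..0} y = R1 a t x y + R2 a c t x y + R3 a c t x y"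
proof -
  consider "x > 0" | "y > 0" | "x \<le> 0" "y \<le> 0" "-t \<le> x" | "x < -t" "y \<le> x + t" "y \<le> 0" | "y \<le> 0" "x < y - t" "x \<le> 0"
    by linarith
  then show ?thesis
  proof cases
    case 1
    then have "R1 a t x y = 0" "R2 a c t x y = 0" using t by (simp_all add: R1_def R2_def)
    moreover have "R3 a c t x y = 0" using 1 t by (cases "y \<le> 0") (simp_all add: R3_def)
    ultimately show ?thesis using 1 by simp
  next
    case 2
    then have "R1 a t x y = 0" "R3 a c t x y = 0" using t by (simp_all add: R1_def R3_def)
    moreover have "R2 a c t x y = 0" using 2 t by (cases "x < -t") (simp_all add: R2_def)
    ultimately show ?thesis using 2 by simp
  next
    case 3
    then have o: "ovt t x y = 0" by (simp add: ovt_def)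
    have "R2 a c t x y = 0" "R3 a c t x y = 0" using 3 by (simp_all add: R2_def R3_def)
    moreover have "R1 a t x y = ennreal (exp (a * x + a * y))" using 3
      by (simp add: R1_def exp_add ennreal_mult)
    ultimately show ?thesis using 3 o by simp
  next
    case 4
    then have o: "ovt t x y = -x-t" by (simp add: ovt_def)
    have e: "a*x + a*y + c\<^sup>2 * (-x-t) = ((a - c\<^sup>2) * x - c\<^sup>2 * t) + (a * y + 0)" by (simp add: algebra_simps)
    have "R1 a t x y = 0" "R3 a c t x y = 0" using 4 by (simp_all add: R1_def R3_def)
    moreover have "R2 a c t x y = ennreal (exp (a*x + a*y + c\<^sup>2 * (-x-t)))" unfolding e using 4
      by (simp add: R2_def exp_add ennreal_mult)
    ultimately show ?thesis using 4 t o by simp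
  next
    case 5
    then have o: "ovt t x y = -y" by (simp add: ovt_def)
    have e: "a*x + a*y + c\<^sup>2 * (-y) = a * x + (a - c\<^sup>2) * y" by (simp add: algebra_simps)
    have "R1 a t x y = 0" "R2 a c t x y = 0" using 5 t by (simp_all add: R1_def R2_def)
    moreover have "R3 a c t x y = ennreal (exp (a*x + a*y + c\<^sup>2 * (-y)))" unfolding e using 5
      by (simp add: R3_def exp_add ennreal_mult)
    ultimately show ?thesis using 5 t o by simp
  qed
qed


lemma J_decomp:
  fixes a c t :: real
  assumes a: "a > 0" and t: "t \<ge> 0"
  shows "(\<integral>\<^sup>+x. (\<integral>\<^sup>+y. ennreal (exp (a*x + a*y + c\<^sup>2 * ovt t x y)) * indicator {..0} x * indicator {..0} y \<partial>lborel) \<partial>lborel)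
    = ennreal ((1 - exp (- a * t)) / a) * ennreal (1 / a)
      + ennreal (1 / a) * (\<integral>\<^sup>+x. ennreal (exp ((2*a - c\<^sup>2) * x + (a - c\<^sup>2) * t)) * indicator {..<-t} x \<partial>lborel)
      + ennreal (1 / a) * (\<integral>\<^sup>+y. ennreal (exp ((a + (a - c\<^sup>2)) * y + (- a * t))) * indicator {..0} y \<partial>lborel)"
proof -
  have i1: "(\<integral>\<^sup>+y. R1 a t x y \<partial>lborel) = ennreal (exp (a * x)) * indicator {-t..0} x * ennreal (1 / a)" for x
    unfolding R1_def using a by (simp add: nn_integral_cmult E1z)
  have i2: "(\<integral>\<^sup>+y. R2 a c t x y \<partial>lborel) = ennreal (1 / a) * (ennreal (exp ((2*a - c\<^sup>2) * x + (a - c\<^sup>2) * t)) * indicator {..<-t} x)" for x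
  proof -
    have "(\<integral>\<^sup>+y. R2 a c t x y \<partial>lborel) = ennreal (exp ((a - c\<^sup>2) * x - c\<^sup>2 * t)) * indicator {..<-t} x * ennreal (exp (a * (x + t)) / a)"
      unfolding R2_def using a by (simp add: nn_integral_cmult E1z)
    also have "\<dots> = ennreal (exp ((a - c\<^sup>2) * x - c\<^sup>2 * t) * (exp (a * (x + t)) / a)) * indicator {..<-t} x"
      by (subst ennreal_mult') (simp_all add: mult_ac)
    also have "exp ((a - c\<^sup>2) * x - c\<^sup>2 * t) * (exp (a * (x + t)) / a) = 1 / a * exp ((2*a - c\<^sup>2) * x + (a - c\<^sup>2) * t)"
    proof -
      have "(a - c\<^sup>2) * x - c\<^sup>2 * t + (a * (x + t)) = (2*a - c\<^sup>2) * x + (a - c\<^sup>2) * t" by (simp add: algebra_simps)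
      then show ?thesis by (simp add: exp_add[symmetric])
    qed
    also have "ennreal (1 / a * exp ((2*a - c\<^sup>2) * x + (a - c\<^sup>2) * t)) * indicator {..<-t} x
        = ennreal (1 / a) * (ennreal (exp ((2*a - c\<^sup>2) * x + (a - c\<^sup>2) * t)) * indicator {..<-t} x)"
      using a by (subst ennreal_mult') (simp_all add: mult.assoc)
    finally show ?thesis .
  qed
  have m1: "R1 a t x \<in> borel_measurable lborel" "R2 a c t x \<in> borel_measurable lborel" "R3 a c t x \<in> borel_measurable lborel" for x
    unfolding R1_def R2_def R3_def by measurable
  have m3: "(\<lambda>x. \<integral>\<^sup>+y. R3 a c t x y \<partial>lborel) \<in> borel_measurable lborel"
    unfolding R3_def by (rule lborel.borel_measurable_nn_integral) (rule R3_meas)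
  have m2: "(\<lambda>x. ennreal (exp (a * x)) * indicator {-t..0} x * ennreal (1 / a)) \<in> borel_measurable lborel"
    "(\<lambda>x. ennreal (1 / a) * (ennreal (exp ((2*a - c\<^sup>2) * x + (a - c\<^sup>2) * t)) * indicator {..<-t} x)) \<in> borel_measurable lborel"
    by measurable
  have "(\<integral>\<^sup>+x. (\<integral>\<^sup>+y. ennreal (exp (a*x + a*y + c\<^sup>2 * ovt t x y)) * indicator {..0} x * indicator {..0} y \<partial>lborel) \<partial>lborel)
     = (\<integral>\<^sup>+x. (\<integral>\<^sup>+y. R1 a t x y \<partial>lborel) + (\<integral>\<^sup>+y. R2 a c t x y \<partial>lborel) + (\<integral>\<^sup>+y. R3 a c t x y \<partial>lborel) \<partial>lborel)"
    unfolding pw_J[OF t] using m1 by (simp add: nn_integral_add)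
  also have "\<dots> = (\<integral>\<^sup>+x. ennreal (exp (a * x)) * indicator {-t..0} x * ennreal (1 / a) \<partial>lborel)
      + (\<integral>\<^sup>+x. ennreal (1 / a) * (ennreal (exp ((2*a - c\<^sup>2) * x + (a - c\<^sup>2) * t)) * indicator {..<-t} x) \<partial>lborel)
      + (\<integral>\<^sup>+x. (\<integral>\<^sup>+y. R3 a c t x y \<partial>lborel) \<partial>lborel)"
    unfolding i1 i2 using m3 m2 by (simp add: nn_integral_add)
  also have "(\<integral>\<^sup>+x. ennreal (exp (a * x)) * indicator {-t..0} x * ennreal (1 / a) \<partial>lborel)
      = ennreal ((1 - exp (- a * t)) / a) * ennreal (1 / a)"
  proof -
    have "(\<integral>\<^sup>+x. ennreal (exp (a * x)) * indicator {-t..0} x * ennreal (1 / a) \<partial>lborel)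
       = (\<integral>\<^sup>+x. ennreal (exp (a * x + 0)) * indicator {-t..0} x \<partial>lborel) * ennreal (1 / a)"
      by (subst nn_integral_multc[symmetric]) auto
    also have "(\<integral>\<^sup>+x. ennreal (exp (a * x + 0)) * indicator {-t..0} x \<partial>lborel) = ennreal ((exp (a * 0 + 0) - exp (a * (-t) + 0)) / a)"
      by (rule E_Icc) (use a t in auto)
    finally show ?thesis by simp
  qed
  also have "(\<integral>\<^sup>+x. ennreal (1 / a) * (ennreal (exp ((2*a - c\<^sup>2) * x + (a - c\<^sup>2) * t)) * indicator {..<-t} x) \<partial>lborel)
      = ennreal (1 / a) * (\<integral>\<^sup>+x. ennreal (exp ((2*a - c\<^sup>2) * x + (a - c\<^sup>2) * t)) * indicator {..<-t} x \<partial>lborel)"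
    by (rule nn_integral_cmult) simp
  also have "(\<integral>\<^sup>+x. (\<integral>\<^sup>+y. R3 a c t x y \<partial>lborel) \<partial>lborel)
      = ennreal (1 / a) * (\<integral>\<^sup>+y. ennreal (exp ((a + (a - c\<^sup>2)) * y + (- a * t))) * indicator {..0} y \<partial>lborel)"
    unfolding R3_def by (rule R3_int[OF a])
  finally show ?thesis .
qed

lemma ennreal_add3: "0 \<le> x \<Longrightarrow> 0 \<le> y \<Longrightarrow> 0 \<le> z \<Longrightarrow> ennreal x + ennreal y + ennreal z = ennreal (x + y + z)"
  by (simp add: ennreal_plus)

lemma J_val:
  fixes a c t :: real
  assumes a: "a > 0" and b: "a - c\<^sup>2 / 2 > 0" and t: "t \<ge> 0"
  shows "(\<integral>\<^sup>+x. (\<integral>\<^sup>+y. ennreal (exp (a*x + a*y + c\<^sup>2 * ovt t x y)) * indicator {..0} x * indicator {..0} y \<partial>lborel) \<partial>lborel)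
    = ennreal ((1 - exp (- a * t)) / a\<^sup>2 + exp (- a * t) / (a * (a - c\<^sup>2 / 2)))"
proof -
  have p: "2*a - c\<^sup>2 > 0" "a + (a - c\<^sup>2) > 0" using b by auto
  have e1: "exp (- a * t) \<le> 1" using a t by simp
  have "(\<integral>\<^sup>+x. ennreal (exp ((2*a - c\<^sup>2) * x + (a - c\<^sup>2) * t)) * indicator {..<-t} x \<partial>lborel)
      = ennreal (exp ((2*a - c\<^sup>2) * (-t) + (a - c\<^sup>2) * t) / (2*a - c\<^sup>2))"
    by (rule E1'[OF p(1)])
  also have "exp ((2*a - c\<^sup>2) * (-t) + (a - c\<^sup>2) * t) = exp (- a * t)"
    by (simp add: algebra_simps)
  finally have T2: "(\<integral>\<^sup>+x. ennreal (exp ((2*a - c\<^sup>2) * x + (a - c\<^sup>2) * t)) * indicator {..<-t} x \<partial>lborel)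
      = ennreal (exp (- a * t) / (2*a - c\<^sup>2))" .
  have T3: "(\<integral>\<^sup>+y. ennreal (exp ((a + (a - c\<^sup>2)) * y + (- a * t))) * indicator {..0} y \<partial>lborel)
      = ennreal (exp (- a * t) / (2*a - c\<^sup>2))"
    using E1[OF p(2), of "- a * t" 0] by (simp add: algebra_simps)
  have nn: "0 \<le> (1 - exp (- a * t)) / a" using e1 a by simp
  have "ennreal ((1 - exp (- a * t)) / a) * ennreal (1 / a) + ennreal (1 / a) * ennreal (exp (- a * t) / (2*a - c\<^sup>2))
       + ennreal (1 / a) * ennreal (exp (- a * t) / (2*a - c\<^sup>2))
     = ennreal ((1 - exp (- a * t)) / a * (1 / a) + 1 / a * (exp (- a * t) / (2*a - c\<^sup>2)) + 1 / a * (exp (- a * t) / (2*a - c\<^sup>2)))"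
  proof -
    have m1: "ennreal ((1 - exp (- a * t)) / a) * ennreal (1 / a) = ennreal ((1 - exp (- a * t)) / a * (1 / a))"
      by (rule ennreal_mult'[symmetric]) (use nn in simp)
    have m2: "ennreal (1 / a) * ennreal (exp (- a * t) / (2*a - c\<^sup>2)) = ennreal (1 / a * (exp (- a * t) / (2*a - c\<^sup>2)))"
      by (rule ennreal_mult'[symmetric]) (use a in simp)
    show ?thesis unfolding m1 m2
      by (rule ennreal_add3) (use nn a p e1 in auto)
  qed
  also have "(1 - exp (- a * t)) / a * (1 / a) + 1 / a * (exp (- a * t) / (2*a - c\<^sup>2)) + 1 / a * (exp (- a * t) / (2*a - c\<^sup>2))
      = (1 - exp (- a * t)) / a\<^sup>2 + exp (- a * t) / (a * (a - c\<^sup>2 / 2))"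
  proof -
    define D where "D = 2*a - c\<^sup>2"
    define E where "E = exp (- a * t)"
    have hD: "a - c\<^sup>2 / 2 = D / 2" unfolding D_def by simp
    have "D > 0" using p unfolding D_def by simp
    then have "(1 - E) / a * (1 / a) + 1 / a * (E / D) + 1 / a * (E / D) = (1 - E) / a\<^sup>2 + E / (a * (D / 2))"
      using a by (simp add: field_simps power2_eq_square)
    then show ?thesis unfolding hD D_def E_def .
  qed
  finally show ?thesis unfolding J_decomp[OF a t] T2 T3 .
qed

lemma J_inf:
  fixes a c t :: real
  assumes a: "a > 0" and b: "a - c\<^sup>2 / 2 \<le> 0" and t: "t \<ge> 0"
  shows "(\<integral>\<^sup>+x. (\<integral>\<^sup>+y. ennreal (exp (a*x + a*y + c\<^sup>2 * ovt t x y)) * indicator {..0} x * indicator {..0} y \<partial>lborel) \<partial>lborel) = \<infinity>"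
proof -
  have "(\<integral>\<^sup>+y. ennreal (exp ((a + (a - c\<^sup>2)) * y + (- a * t))) * indicator {..0} y \<partial>lborel) = \<infinity>"
    by (rule E0) (use b in simp)
  then have "ennreal (1 / a) * (\<integral>\<^sup>+y. ennreal (exp ((a + (a - c\<^sup>2)) * y + (- a * t))) * indicator {..0} y \<partial>lborel) = \<infinity>"
    using a by (simp add: ennreal_mult_eq_top_iff)
  then show ?thesis unfolding J_decomp[OF a t] by simp
qed


context bm begin

lemma W_joint: "(\<lambda>p. W (fst p) (snd p)) \<in> borel_measurable (lborel \<Otimes>\<^sub>M M)"
proof (rule borel_measurable_LIMSEQ_real)
  define u where "u n p = W (real_of_int \<lfloor>fst p * 2^n\<rfloor> / 2^n) (snd p)" for n :: nat and p :: "real \<times> 'a"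
  show "u n \<in> borel_measurable (lborel \<Otimes>\<^sub>M M)" for n
    unfolding u_def
    by (rule measurable_compose_countable'[where I=UNIV and f="\<lambda>(i::int) p. W (real_of_int i / 2^n) (snd p)" and g="\<lambda>p. \<lfloor>fst p * (2::real)^n\<rfloor>"]) measurable
  fix p :: "real \<times> 'a" assume p: "p \<in> space (lborel \<Otimes>\<^sub>M M)"
  then have \<omega>: "snd p \<in> space M" by (auto simp add: space_pair_measure)
  have lim: "(\<lambda>n. real_of_int \<lfloor>fst p * 2^n\<rfloor> / 2^n) \<longlonglongrightarrow> fst p"
  proof (rule tendsto_sandwich[of "\<lambda>n. fst p - (1/2)^n" _ _ "\<lambda>n. fst p"])
    show "\<forall>\<^sub>F n in sequentially. fst p - (1 / 2) ^ n \<le> real_of_int \<lfloor>fst p * 2 ^ n\<rfloor> / 2 ^ n"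
    proof (intro always_eventually allI)
      fix n :: nat
      have "fst p * 2^n - 1 \<le> real_of_int \<lfloor>fst p * 2 ^ n\<rfloor>" by linarith
      then have "(fst p * 2^n - 1) / 2^n \<le> real_of_int \<lfloor>fst p * 2 ^ n\<rfloor> / 2 ^ n"
        by (intro divide_right_mono) auto
      then show "fst p - (1 / 2) ^ n \<le> real_of_int \<lfloor>fst p * 2 ^ n\<rfloor> / 2 ^ n"
        by (simp add: diff_divide_distrib power_one_over)
    qed
    show "\<forall>\<^sub>F n in sequentially. real_of_int \<lfloor>fst p * 2 ^ n\<rfloor> / 2 ^ n \<le> fst p"
    proof (intro always_eventually allI)
      fix n :: nat
      have "real_of_int \<lfloor>fst p * 2 ^ n\<rfloor> \<le> fst p * 2^n" by linarith
      then show "real_of_int \<lfloor>fst p * 2 ^ n\<rfloor> / 2 ^ n \<le> fst p"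
        by (simp add: divide_le_eq)
    qed
    have "(\<lambda>n. fst p - (1/2::real)^n) \<longlonglongrightarrow> fst p - 0"
      by (intro tendsto_diff tendsto_const LIMSEQ_realpow_zero) auto
    then show "(\<lambda>n. fst p - (1/2::real)^n) \<longlonglongrightarrow> fst p" by simp
  qed simp
  have "isCont (\<lambda>t. W t (snd p)) (fst p)"
    using Wcont[OF \<omega>] by (simp add: continuous_on_eq_continuous_at)
  from isCont_tendsto_compose[OF this lim]
  show "(\<lambda>n. u n p) \<longlonglongrightarrow> W (fst p) (snd p)" by (simp add: u_def)
qed

lemma W_comp[measurable (raw)]:
  assumes "f \<in> borel_measurable N" "h \<in> measurable N M"
  shows "(\<lambda>z. W (f z) (h z)) \<in> borel_measurable N"
proof -
  have "(\<lambda>z. (f z, h z)) \<in> measurable N (lborel \<Otimes>\<^sub>M M)"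
    using assms by (intro measurable_Pair) auto
  from measurable_compose[OF this W_joint] show ?thesis by simp
qed

end

locale bm2 = bm +
  fixes g c :: real
  assumes c_pos: "c > 0" and g_pos: "g > 0"
    and growth: "\<forall>\<omega>\<in>space M. ((\<lambda>t. W t \<omega> / t) \<longlongrightarrow> 0) at_bot"
begin

definition F :: "real \<Rightarrow> 'a \<Rightarrow> real \<Rightarrow> real" where
  "F r \<omega> x = exp (g * x + c * (W (x + r) \<omega> - W r \<omega>))"

lemma F_meas[measurable (raw)]:
  assumes "f \<in> borel_measurable N" "h \<in> measurable N M"
  shows "(\<lambda>z. F r (h z) (f z)) \<in> borel_measurable N"
  unfolding F_def using assms by measurable

definition Phi :: "real \<Rightarrow> 'a \<Rightarrow> ennreal" where
  "Phi r \<omega> = (\<integral>\<^sup>+x. ennreal (F r \<omega> x) * indicator {..0} x \<partial>lborel)"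

definition N :: "real \<Rightarrow> 'a \<Rightarrow> real" where
  "N r \<omega> = (LINT x:{..0}|lborel. F r \<omega> x)"

lemma F_meas_x: "\<omega> \<in> space M \<Longrightarrow> F r \<omega> \<in> borel_measurable lborel"
proof -
  assume \<omega>: "\<omega> \<in> space M"
  have "(\<lambda>z. F r ((\<lambda>_. \<omega>) z) ((\<lambda>x. x) z)) \<in> borel_measurable lborel"
    by (rule F_meas) (use \<omega> in auto)
  then show ?thesis by simp
qed

lemma Phi_fin:
  assumes \<omega>: "\<omega> \<in> space M"
  shows "Phi r \<omega> < \<infinity>"
proof -
  define \<epsilon> where "\<epsilon> = g / (2 * c)"
  have \<epsilon>: "\<epsilon> > 0" using g_pos c_pos by (simp add: \<epsilon>_def)
  have "((\<lambda>t. W t \<omega> / t) \<longlongrightarrow> 0) at_bot" using growth \<omega> by blast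
  from tendstoD[OF this \<epsilon>] obtain T where T: "\<And>t. t \<le> T \<Longrightarrow> \<bar>W t \<omega> / t\<bar> < \<epsilon>"
    by (auto simp: eventually_at_bot_linorder)
  define T' where "T' = min T (-1)"
  define h where "h x = g * x + c * (W (x + r) \<omega> - W r \<omega>) - g / 2 * x" for x
  have r1: "h x \<le> - g / 2 * r - c * W r \<omega>" if x: "x \<le> T' - r" for x
  proof -
    have t1: "x + r \<le> T" "x + r < 0" using x by (auto simp: T'_def)
    have "\<bar>W (x + r) \<omega>\<bar> / \<bar>x + r\<bar> < \<epsilon>" using T[OF t1(1)] by (simp add: abs_divide)
    then have "\<bar>W (x + r) \<omega>\<bar> < \<epsilon> * (- (x + r))" using t1(2) by (simp add: divide_less_eq)
    then have "c * W (x + r) \<omega> \<le> c * (\<epsilon> * (- (x + r)))" using c_pos by (intro mult_left_mono) auto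
    also have "c * (\<epsilon> * (- (x + r))) = - g / 2 * (x + r)" using c_pos by (simp add: \<epsilon>_def field_simps)
    finally have fin: "c * W (x + r) \<omega> \<le> - g / 2 * (x + r)" .
    have "h x = c * W (x + r) \<omega> + g / 2 * x - c * W r \<omega>" by (simp add: h_def algebra_simps)
    also have "\<dots> \<le> - g / 2 * (x + r) + g / 2 * x - c * W r \<omega>" using fin by simp
    also have "\<dots> = - g / 2 * r - c * W r \<omega>" by (simp add: algebra_simps)
    finally show ?thesis .
  qed
  have "continuous_on {T' - r..0} h"
  proof -
    have "continuous_on {T' - r..0} (\<lambda>x. W (x + r) \<omega>)"
      by (rule continuous_on_compose2[OF Wcont[OF \<omega>]]) (auto intro!: continuous_intros)
    then show ?thesis unfolding h_def by (auto intro!: continuous_intros)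
  qed
  from compact_imp_bounded[OF compact_continuous_image[OF this compact_Icc]]
  obtain B2 where B2: "\<And>x. x \<in> {T' - r..0} \<Longrightarrow> \<bar>h x\<bar> \<le> B2"
    unfolding bounded_iff by (metis image_eqI real_norm_def)
  define B where "B = max B2 (- g / 2 * r - c * W r \<omega>)"
  have hB: "h x \<le> B" if "x \<le> 0" for x
  proof (cases "x \<le> T' - r")
    case True then show ?thesis using r1[OF True] unfolding B_def by linarith
  next
    case False then have "\<bar>h x\<bar> \<le> B2" using B2 that by simp
    then show ?thesis by (simp add: B_def)
  qed
  have "Phi r \<omega> \<le> (\<integral>\<^sup>+x. ennreal (exp B) * (ennreal (exp (g / 2 * x)) * indicator {..0} x) \<partial>lborel)"
    unfolding Phi_def
  proof (rule nn_integral_mono)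
    fix x
    show "ennreal (F r \<omega> x) * indicator {..0} x \<le> ennreal (exp B) * (ennreal (exp (g / 2 * x)) * indicator {..0} x)"
    proof (cases "x \<le> 0")
      case True
      have "F r \<omega> x = exp (h x + g / 2 * x)" by (simp add: F_def h_def)
      also have "\<dots> \<le> exp (B + g / 2 * x)" using hB[OF True] by simp
      also have "\<dots> = exp B * exp (g / 2 * x)" by (simp add: exp_add)
      finally show ?thesis using True by (simp add: ennreal_mult[symmetric] ennreal_leI)
    qed simp
  qed
  also have "\<dots> = ennreal (exp B) * ennreal (exp (g / 2 * 0) / (g / 2))"
    by (subst nn_integral_cmult) (use g_pos E1z[of "g/2" 0] in auto)
  also have "\<dots> < \<infinity>" by (simp add: ennreal_mult_less_top)
  finally show ?thesis .
qed

lemma N_eq: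
  assumes \<omega>: "\<omega> \<in> space M"
  shows "ennreal (N r \<omega>) = Phi r \<omega>"
proof -
  have m: "(\<lambda>x. indicator {..0} x *\<^sub>R F r \<omega> x) \<in> borel_measurable lborel"
    using F_meas_x[OF \<omega>] by measurable
  have "N r \<omega> = enn2real (\<integral>\<^sup>+x. ennreal (indicator {..0} x *\<^sub>R F r \<omega> x) \<partial>lborel)"
    unfolding N_def set_lebesgue_integral_def
    by (rule integral_eq_nn_integral[OF m]) (auto simp: F_def)
  also have "(\<integral>\<^sup>+x. ennreal (indicator {..0} x *\<^sub>R F r \<omega> x) \<partial>lborel) = Phi r \<omega>"
    unfolding Phi_def by (intro nn_integral_cong) (simp split: split_indicator)
  finally show ?thesis using Phi_fin[OF \<omega>] by simp
qed

lemma N_nonneg: "\<omega> \<in> space M \<Longrightarrow> 0 \<le> N r \<omega>"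
  unfolding N_def set_lebesgue_integral_def
  by (intro integral_nonneg_AE) (auto simp: F_def)

lemma N_meas[measurable]: "N r \<in> borel_measurable M"
proof -
  have "(\<lambda>\<omega>. enn2real (Phi r \<omega>)) \<in> borel_measurable M"
    unfolding Phi_def by measurable
  moreover have "\<omega> \<in> space M \<Longrightarrow> enn2real (Phi r \<omega>) = N r \<omega>" for \<omega>
    using N_eq[of \<omega> r] N_nonneg[of \<omega> r] by (metis enn2real_ennreal)
  ultimately show ?thesis by (rule measurable_cong[THEN iffD1, rotated])
qed

end

context bm2 begin

lemma psf: "pair_sigma_finite lborel M"
  by (simp add: pair_sigma_finite_def sigma_finite_lborel prob_space_imp_sigma_finite ps)

lemma inner1:
  assumes x: "x \<le> 0"
  shows "(\<integral>\<^sup>+\<omega>. ennreal (F r \<omega> x) \<partial>M) = ennreal (exp ((g - c\<^sup>2 / 2) * x))"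
proof -
  have "(\<integral>\<^sup>+\<omega>. ennreal (F r \<omega> x) \<partial>M) = (\<integral>\<^sup>+\<omega>. ennreal (exp (g * x)) * ennreal (exp ((-c) * (W r \<omega> - W (x + r) \<omega>))) \<partial>M)"
    by (intro nn_integral_cong) (simp add: F_def ennreal_mult[symmetric] exp_add[symmetric] algebra_simps)
  also have "\<dots> = ennreal (exp (g * x)) * (\<integral>\<^sup>+\<omega>. ennreal (exp ((-c) * (W r \<omega> - W (x + r) \<omega>))) \<partial>M)"
    by (rule nn_integral_cmult) simp
  also have "(\<integral>\<^sup>+\<omega>. ennreal (exp ((-c) * (W r \<omega> - W (x + r) \<omega>))) \<partial>M) = ennreal (exp ((-c)\<^sup>2 * (r - (x + r)) / 2))"
    by (rule incr) (use x in simp)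
  also have "ennreal (exp (g * x)) * ennreal (exp ((-c)\<^sup>2 * (r - (x + r)) / 2)) = ennreal (exp (g * x) * exp ((-c)\<^sup>2 * (r - (x + r)) / 2))"
    by (rule ennreal_mult'[symmetric]) simp
  also have "exp (g * x) * exp ((-c)\<^sup>2 * (r - (x + r)) / 2) = exp ((g - c\<^sup>2 / 2) * x)"
  proof -
    have eq: "g * x + (-c)\<^sup>2 * (r - (x + r)) / 2 = (g - c\<^sup>2 / 2) * x" by (simp add: field_simps)
    show ?thesis by (simp only: exp_add[symmetric] eq)
  qed
  finally show ?thesis .
qed

lemma E_Phi:
  "(\<integral>\<^sup>+\<omega>. Phi r \<omega> \<partial>M) = (\<integral>\<^sup>+x. ennreal (exp ((g - c\<^sup>2 / 2) * x)) * indicator {..0} x \<partial>lborel)"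
proof -
  interpret pair_sigma_finite lborel M by (rule psf)
  have "(\<integral>\<^sup>+\<omega>. Phi r \<omega> \<partial>M) = (\<integral>\<^sup>+x. (\<integral>\<^sup>+\<omega>. ennreal (F r \<omega> x) * indicator {..0} x \<partial>M) \<partial>lborel)"
    unfolding Phi_def by (rule Fubini') measurable
  also have "\<dots> = (\<integral>\<^sup>+x. ennreal (exp ((g - c\<^sup>2 / 2) * x)) * indicator {..0} x \<partial>lborel)"
  proof (intro nn_integral_cong)
    fix x :: real
    show "(\<integral>\<^sup>+\<omega>. ennreal (F r \<omega> x) * indicator {..0} x \<partial>M) = ennreal (exp ((g - c\<^sup>2 / 2) * x)) * indicator {..0} x"
    proof (cases "x \<le> 0")
      case True then show ?thesis by (simp add: inner1)
    qed simp
  qed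
  finally show ?thesis .
qed

lemma ov_ovt: "t \<ge> 0 \<Longrightarrow> ov (x + (r + t)) (r + t) (y + r) r = ovt t x y"
  unfolding ov_def ovt_def by (simp add: max_def min_def)

lemma inner2:
  assumes x: "x \<le> 0" and y: "y \<le> 0" and t: "t \<ge> 0"
  shows "(\<integral>\<^sup>+\<omega>. ennreal (F (r + t) \<omega> x) * ennreal (F r \<omega> y) \<partial>M)
    = ennreal (exp ((g - c\<^sup>2 / 2) * x + (g - c\<^sup>2 / 2) * y + c\<^sup>2 * ovt t x y))"
proof -
  have "(\<integral>\<^sup>+\<omega>. ennreal (F (r + t) \<omega> x) * ennreal (F r \<omega> y) \<partial>M)
     = (\<integral>\<^sup>+\<omega>. ennreal (exp (g * x + g * y)) *
          ennreal (exp ((-c) * (W (r + t) \<omega> - W (x + (r + t)) \<omega>) + (-c) * (W r \<omega> - W (y + r) \<omega>))) \<partial>M)"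
    by (intro nn_integral_cong) (simp add: F_def ennreal_mult[symmetric] exp_add[symmetric] algebra_simps)
  also have "\<dots> = ennreal (exp (g * x + g * y)) *
      ennreal (exp ((-c)\<^sup>2 / 2 * (((r + t) - (x + (r + t))) + (r - (y + r)) + 2 * ov (x + (r + t)) (r + t) (y + r) r)))"
  proof -
    have "(\<integral>\<^sup>+\<omega>. ennreal (exp ((-c) * (W (r + t) \<omega> - W (x + (r + t)) \<omega>) + (-c) * (W r \<omega> - W (y + r) \<omega>))) \<partial>M)
      = ennreal (exp ((-c)\<^sup>2 / 2 * (((r + t) - (x + (r + t))) + (r - (y + r)) + 2 * ov (x + (r + t)) (r + t) (y + r) r)))"
      by (rule two_int) (use x y in simp_all)
    then show ?thesis by (subst nn_integral_cmult) simp_all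
  qed
  also have "\<dots> = ennreal (exp ((g - c\<^sup>2 / 2) * x + (g - c\<^sup>2 / 2) * y + c\<^sup>2 * ovt t x y))"
  proof -
    have eq: "g * x + g * y + (-c)\<^sup>2 / 2 * (((r + t) - (x + (r + t))) + (r - (y + r)) + 2 * ovt t x y)
      = (g - c\<^sup>2 / 2) * x + (g - c\<^sup>2 / 2) * y + c\<^sup>2 * ovt t x y" by (simp add: field_simps)
    show ?thesis unfolding ov_ovt[OF t]
      by (subst ennreal_mult'[symmetric]) (simp_all only: exp_add[symmetric] eq exp_ge_zero)
  qed
  finally show ?thesis .
qed

lemma E_PhiPhi:
  assumes t: "t \<ge> 0"
  shows "(\<integral>\<^sup>+\<omega>. Phi (r + t) \<omega> * Phi r \<omega> \<partial>M)
    = (\<integral>\<^sup>+x. (\<integral>\<^sup>+y. ennreal (exp ((g - c\<^sup>2 / 2) * x + (g - c\<^sup>2 / 2) * y + c\<^sup>2 * ovt t x y)) * indicator {..0} x * indicator {..0} y \<partial>lborel) \<partial>lborel)"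
proof -
  interpret pair_sigma_finite lborel M by (rule psf)
  define G where "G x y \<omega> = (ennreal (F (r + t) \<omega> x) * indicator {..0} x) * (ennreal (F r \<omega> y) * indicator {..0} y)" for x y \<omega>
  have "(\<integral>\<^sup>+\<omega>. Phi (r + t) \<omega> * Phi r \<omega> \<partial>M) = (\<integral>\<^sup>+\<omega>. (\<integral>\<^sup>+x. (\<integral>\<^sup>+y. G x y \<omega> \<partial>lborel) \<partial>lborel) \<partial>M)"
  proof (rule nn_integral_cong)
    fix \<omega> assume \<omega>: "\<omega> \<in> space M"
    note m = F_meas_x[OF \<omega>]
    have "Phi (r + t) \<omega> * Phi r \<omega> = (\<integral>\<^sup>+x. ennreal (F (r + t) \<omega> x) * indicator {..0} x * Phi r \<omega> \<partial>lborel)"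
      unfolding Phi_def by (rule nn_integral_multc[symmetric]) (use m in measurable)
    also have "\<dots> = (\<integral>\<^sup>+x. (\<integral>\<^sup>+y. G x y \<omega> \<partial>lborel) \<partial>lborel)"
      unfolding Phi_def G_def by (intro nn_integral_cong nn_integral_cmult[symmetric]) (use m in measurable)
    finally show "Phi (r + t) \<omega> * Phi r \<omega> = (\<integral>\<^sup>+x. (\<integral>\<^sup>+y. G x y \<omega> \<partial>lborel) \<partial>lborel)" .
  qed
  also have "\<dots> = (\<integral>\<^sup>+x. (\<integral>\<^sup>+\<omega>. (\<integral>\<^sup>+y. G x y \<omega> \<partial>lborel) \<partial>M) \<partial>lborel)"
    by (rule Fubini') (unfold G_def, measurable)
  also have "\<dots> = (\<integral>\<^sup>+x. (\<integral>\<^sup>+y. (\<integral>\<^sup>+\<omega>. G x y \<omega> \<partial>M) \<partial>lborel) \<partial>lborel)"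
  proof (rule nn_integral_cong)
    fix x :: real
    show "(\<integral>\<^sup>+\<omega>. (\<integral>\<^sup>+y. G x y \<omega> \<partial>lborel) \<partial>M) = (\<integral>\<^sup>+y. (\<integral>\<^sup>+\<omega>. G x y \<omega> \<partial>M) \<partial>lborel)"
      by (rule Fubini') (unfold G_def, measurable)
  qed
  also have "\<dots> = (\<integral>\<^sup>+x. (\<integral>\<^sup>+y. ennreal (exp ((g - c\<^sup>2 / 2) * x + (g - c\<^sup>2 / 2) * y + c\<^sup>2 * ovt t x y)) * indicator {..0} x * indicator {..0} y \<partial>lborel) \<partial>lborel)"
  proof (intro nn_integral_cong)
    fix x y :: real
    show "(\<integral>\<^sup>+\<omega>. G x y \<omega> \<partial>M) = ennreal (exp ((g - c\<^sup>2 / 2) * x + (g - c\<^sup>2 / 2) * y + c\<^sup>2 * ovt t x y)) * indicator {..0} x * indicator {..0} y"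
    proof (cases "x \<le> 0 \<and> y \<le> 0")
      case True
      then show ?thesis unfolding G_def using inner2[of x y t r] t by (simp add: mult_ac)
    next
      case False then show ?thesis unfolding G_def by (auto split: split_indicator)
    qed
  qed
  finally show ?thesis .
qed

end

lemma E0z: "p \<le> 0 \<Longrightarrow> (\<integral>\<^sup>+x. ennreal (exp (p * x)) * indicator {..z} x \<partial>lborel) = \<infinity>"
  using E0[of p 0 z] by simp

context bm2 begin

lemma NN_nn: "(\<integral>\<^sup>+\<omega>. ennreal (N r \<omega>) \<partial>M) = (\<integral>\<^sup>+x. ennreal (exp ((g - c\<^sup>2 / 2) * x)) * indicator {..0} x \<partial>lborel)"
proof -
  have "(\<integral>\<^sup>+\<omega>. ennreal (N r \<omega>) \<partial>M) = (\<integral>\<^sup>+\<omega>. Phi r \<omega> \<partial>M)"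
    by (intro nn_integral_cong) (simp add: N_eq)
  then show ?thesis by (simp add: E_Phi)
qed

lemma N_int_iff: "integrable M (N r) \<longleftrightarrow> g - c\<^sup>2 / 2 > 0"
proof -
  have "integrable M (N r) \<longleftrightarrow> (\<integral>\<^sup>+\<omega>. ennreal (norm (N r \<omega>)) \<partial>M) < \<infinity>"
    by (simp add: integrable_iff_bounded)
  also have "(\<integral>\<^sup>+\<omega>. ennreal (norm (N r \<omega>)) \<partial>M) = (\<integral>\<^sup>+\<omega>. ennreal (N r \<omega>) \<partial>M)"
    by (intro nn_integral_cong) (simp add: N_nonneg)
  also have "\<dots> < \<infinity> \<longleftrightarrow> g - c\<^sup>2 / 2 > 0"
  proof (cases "g - c\<^sup>2 / 2 > 0")
    case True then show ?thesis by (simp add: NN_nn E1z)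
  next
    case False then show ?thesis by (simp add: NN_nn E0z)
  qed
  finally show ?thesis .
qed

lemma N_integral:
  assumes a: "g - c\<^sup>2 / 2 > 0"
  shows "(\<integral>\<omega>. N r \<omega> \<partial>M) = 1 / (g - c\<^sup>2 / 2)"
proof -
  have "(\<integral>\<omega>. N r \<omega> \<partial>M) = enn2real (\<integral>\<^sup>+\<omega>. ennreal (N r \<omega>) \<partial>M)"
    by (rule integral_eq_nn_integral) (auto simp: N_nonneg)
  also have "\<dots> = 1 / (g - c\<^sup>2 / 2)" unfolding NN_nn using a by (simp add: E1z)
  finally show ?thesis .
qed

lemma NNprod_nn:
  assumes t: "t \<ge> 0"
  shows "(\<integral>\<^sup>+\<omega>. ennreal (N (r + t) \<omega> * N r \<omega>) \<partial>M)
    = (\<integral>\<^sup>+x. (\<integral>\<^sup>+y. ennreal (exp ((g - c\<^sup>2 / 2) * x + (g - c\<^sup>2 / 2) * y + c\<^sup>2 * ovt t x y)) * indicator {..0} x * indicator {..0} y \<partial>lborel) \<partial>lborel)"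
proof -
  have "(\<integral>\<^sup>+\<omega>. ennreal (N (r + t) \<omega> * N r \<omega>) \<partial>M) = (\<integral>\<^sup>+\<omega>. Phi (r + t) \<omega> * Phi r \<omega> \<partial>M)"
    by (intro nn_integral_cong) (simp add: N_eq N_nonneg ennreal_mult)
  then show ?thesis by (simp add: E_PhiPhi t)
qed

lemma NNprod_val:
  assumes b: "g - c\<^sup>2 > 0" and t: "t \<ge> 0"
  shows "(\<integral>\<^sup>+\<omega>. ennreal (N (r + t) \<omega> * N r \<omega>) \<partial>M)
    = ennreal ((1 - exp (- (g - c\<^sup>2 / 2) * t)) / (g - c\<^sup>2 / 2)\<^sup>2 + exp (- (g - c\<^sup>2 / 2) * t) / ((g - c\<^sup>2 / 2) * (g - c\<^sup>2)))"
proof -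
  have c2: "c\<^sup>2 \<ge> 0" by simp
  have a: "g - c\<^sup>2 / 2 > 0" using b c2 by linarith
  have b': "(g - c\<^sup>2 / 2) - c\<^sup>2 / 2 > 0" using b by simp
  have e: "(g - c\<^sup>2 / 2) - c\<^sup>2 / 2 = g - c\<^sup>2" by simp
  have "(\<integral>\<^sup>+\<omega>. ennreal (N (r + t) \<omega> * N r \<omega>) \<partial>M)
    = (\<integral>\<^sup>+x. (\<integral>\<^sup>+y. ennreal (exp ((g - c\<^sup>2 / 2) * x + (g - c\<^sup>2 / 2) * y + c\<^sup>2 * ovt t x y)) * indicator {..0} x * indicator {..0} y \<partial>lborel) \<partial>lborel)"
    by (rule NNprod_nn[OF t])
  also have "\<dots> = ennreal ((1 - exp (- (g - c\<^sup>2 / 2) * t)) / (g - c\<^sup>2 / 2)\<^sup>2 + exp (- (g - c\<^sup>2 / 2) * t) / ((g - c\<^sup>2 / 2) * ((g - c\<^sup>2 / 2) - c\<^sup>2 / 2)))"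
    by (rule J_val[OF a b' t])
  finally show ?thesis by (simp only: e)
qed

lemma NNprod_inf:
  assumes a: "g - c\<^sup>2 / 2 > 0" and b: "g - c\<^sup>2 \<le> 0" and t: "t \<ge> 0"
  shows "(\<integral>\<^sup>+\<omega>. ennreal (N (r + t) \<omega> * N r \<omega>) \<partial>M) = \<infinity>"
proof -
  have b': "(g - c\<^sup>2 / 2) - c\<^sup>2 / 2 \<le> 0" using b by simp
  have "(\<integral>\<^sup>+\<omega>. ennreal (N (r + t) \<omega> * N r \<omega>) \<partial>M)
    = (\<integral>\<^sup>+x. (\<integral>\<^sup>+y. ennreal (exp ((g - c\<^sup>2 / 2) * x + (g - c\<^sup>2 / 2) * y + c\<^sup>2 * ovt t x y)) * indicator {..0} x * indicator {..0} y \<partial>lborel) \<partial>lborel)"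
    by (rule NNprod_nn[OF t])
  also have "\<dots> = \<infinity>" by (rule J_inf[OF a b' t])
  finally show ?thesis .
qed

end

lemma Var_eq:
  assumes P: "prob_space M" and X: "integrable M X" and X2: "integrable M (\<lambda>\<omega>. (X \<omega>)\<^sup>2)"
  shows "Var M X = (\<integral>\<omega>. (X \<omega>)\<^sup>2 \<partial>M) - (\<integral>\<omega>. X \<omega> \<partial>M)\<^sup>2"
proof -
  interpret prob_space M by (rule P)
  define m where "m = (\<integral>\<omega>. X \<omega> \<partial>M)"
  have "Var M X = (\<integral>\<omega>. (X \<omega>)\<^sup>2 - 2 * m * X \<omega> + m\<^sup>2 \<partial>M)"
  proof -
    have "(\<lambda>\<omega>. (X \<omega> - m)\<^sup>2) = (\<lambda>\<omega>. (X \<omega>)\<^sup>2 - 2 * m * X \<omega> + m\<^sup>2)"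
      by (auto simp: fun_eq_iff power2_diff mult_ac)
    then show ?thesis unfolding Var_def m_def[symmetric] by simp
  qed
  also have "\<dots> = (\<integral>\<omega>. (X \<omega>)\<^sup>2 \<partial>M) - 2 * m * m + m\<^sup>2"
    using X X2 by (simp add: m_def prob_space)
  finally show ?thesis by (simp add: m_def power2_eq_square)
qed

lemma Var_cong: "(\<And>\<omega>. \<omega> \<in> space M \<Longrightarrow> X \<omega> = Y \<omega>) \<Longrightarrow> Var M X = Var M Y"
  unfolding Var_def by (simp cong: Bochner_Integration.integral_cong)

lemma Cov_cong: "(\<And>\<omega>. \<omega> \<in> space M \<Longrightarrow> X \<omega> = X' \<omega>) \<Longrightarrow> (\<And>\<omega>. \<omega> \<in> space M \<Longrightarrow> Y \<omega> = Y' \<omega>) \<Longrightarrow> Cov M X Y = Cov M X' Y'"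
  unfolding Cov_def by (simp cong: Bochner_Integration.integral_cong)

context bm2 begin

definition Jv :: "real \<Rightarrow> real" where
  "Jv t = (1 - exp (- (g - c\<^sup>2 / 2) * t)) / (g - c\<^sup>2 / 2)\<^sup>2 + exp (- (g - c\<^sup>2 / 2) * t) / ((g - c\<^sup>2 / 2) * (g - c\<^sup>2))"

lemma Jv_nonneg: assumes b: "g - c\<^sup>2 > 0" and t: "t \<ge> 0" shows "Jv t \<ge> 0"
proof -
  have c2: "c\<^sup>2 \<ge> 0" by simp
  have a: "g - c\<^sup>2 / 2 > 0" using b c2 by linarith
  have "(g - c\<^sup>2 / 2) * t \<ge> 0" using a t by simp
  then have h: "- (g - c\<^sup>2 / 2) * t \<le> 0" by linarith
  then have "exp (- (g - c\<^sup>2 / 2) * t) \<le> 1" by (subst exp_le_one_iff)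
  then show ?thesis unfolding Jv_def using a b by (intro add_nonneg_nonneg divide_nonneg_pos) auto
qed

lemma EPP_aux:
  assumes b: "g - c\<^sup>2 > 0" and t: "t \<ge> 0"
  shows "integrable M (\<lambda>\<omega>. N (r + t) \<omega> * N r \<omega>) \<and> (\<integral>\<omega>. N (r + t) \<omega> * N r \<omega> \<partial>M) = Jv t"
proof -
  have nn: "(\<integral>\<^sup>+\<omega>. ennreal (N (r + t) \<omega> * N r \<omega>) \<partial>M) = ennreal (Jv t)"
    unfolding Jv_def by (rule NNprod_val[OF b t])
  have "integrable M (\<lambda>\<omega>. N (r + t) \<omega> * N r \<omega>)"
  proof -
    have "(\<integral>\<^sup>+\<omega>. ennreal (norm (N (r + t) \<omega> * N r \<omega>)) \<partial>M) = (\<integral>\<^sup>+\<omega>. ennreal (N (r + t) \<omega> * N r \<omega>) \<partial>M)"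
      by (intro nn_integral_cong) (simp add: N_nonneg)
    then show ?thesis unfolding integrable_iff_bounded using nn by simp
  qed
  moreover have "(\<integral>\<omega>. N (r + t) \<omega> * N r \<omega> \<partial>M) = Jv t"
  proof -
    have "(\<integral>\<omega>. N (r + t) \<omega> * N r \<omega> \<partial>M) = enn2real (\<integral>\<^sup>+\<omega>. ennreal (N (r + t) \<omega> * N r \<omega>) \<partial>M)"
      by (rule integral_eq_nn_integral) (auto simp: N_nonneg)
    then show ?thesis using nn Jv_nonneg[OF b t] by simp
  qed
  ultimately show ?thesis ..
qed

lemma EPP:
  assumes b: "g - c\<^sup>2 > 0"
  shows "integrable M (\<lambda>\<omega>. N u \<omega> * N v \<omega>) \<and> (\<integral>\<omega>. N u \<omega> * N v \<omega> \<partial>M) = Jv \<bar>u - v\<bar>"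
proof (cases "v \<le> u")
  case True
  then show ?thesis using EPP_aux[OF b, of "u - v" v] by simp
next
  case False
  then have "integrable M (\<lambda>\<omega>. N (u + (v - u)) \<omega> * N u \<omega>) \<and> (\<integral>\<omega>. N (u + (v - u)) \<omega> * N u \<omega> \<partial>M) = Jv (v - u)"
    using EPP_aux[OF b, of "v - u" u] by simp
  then show ?thesis using False by (simp add: mult.commute abs_if)
qed

lemma sq_int_iff: "integrable M (\<lambda>\<omega>. (N r \<omega>)\<^sup>2) \<longleftrightarrow> g - c\<^sup>2 > 0"
proof
  assume b: "g - c\<^sup>2 > 0"
  then show "integrable M (\<lambda>\<omega>. (N r \<omega>)\<^sup>2)" using EPP[OF b, of r r] by (simp add: power2_eq_square)
next
  assume int: "integrable M (\<lambda>\<omega>. (N r \<omega>)\<^sup>2)"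
  show "g - c\<^sup>2 > 0"
  proof (rule ccontr)
    assume nb: "\<not> g - c\<^sup>2 > 0"
    show False
    proof (cases "g - c\<^sup>2 / 2 > 0")
      case True
      have "(\<integral>\<^sup>+\<omega>. ennreal (N (r + 0) \<omega> * N r \<omega>) \<partial>M) = \<infinity>"
        by (rule NNprod_inf[OF True]) (use nb in auto)
      moreover have "(\<integral>\<^sup>+\<omega>. ennreal (norm ((N r \<omega>)\<^sup>2)) \<partial>M) = (\<integral>\<^sup>+\<omega>. ennreal (N (r + 0) \<omega> * N r \<omega>) \<partial>M)"
        by (intro nn_integral_cong) (simp add: power2_eq_square)
      ultimately show False using int unfolding integrable_iff_bounded by simp
    next
      case False
      have "integrable M (\<lambda>\<omega>. 1 + (N r \<omega>)\<^sup>2)" using int by simp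
      then have "integrable M (N r)"
      proof (rule Bochner_Integration.integrable_bound)
        show "AE \<omega> in M. norm (N r \<omega>) \<le> norm (1 + (N r \<omega>)\<^sup>2)"
        proof (intro AE_I2)
          fix \<omega> assume "\<omega> \<in> space M"
          have sq: "0 \<le> (N r \<omega> - 1/2)\<^sup>2" by simp
          have "(N r \<omega> - 1/2)\<^sup>2 = (N r \<omega>)\<^sup>2 - N r \<omega> + 1/4" by (simp add: power2_eq_square algebra_simps)
          then have "N r \<omega> \<le> 1 + (N r \<omega>)\<^sup>2" using sq by linarith
          then show "norm (N r \<omega>) \<le> norm (1 + (N r \<omega>)\<^sup>2)" using N_nonneg[OF \<open>\<omega> \<in> space M\<close>] by simp
        qed
      qed simp
      then show False using False N_int_iff by simp
    qed
  qed
qed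

lemma N_sq_integral:
  assumes b: "g - c\<^sup>2 > 0"
  shows "(\<integral>\<omega>. (N r \<omega>)\<^sup>2 \<partial>M) = Jv 0"
  using EPP[OF b, of r r] by (simp add: power2_eq_square)

end

lemma sqrt_cond: assumes "c > 0" "K > 0" "(x::real) \<ge> 0" "c = \<sigma> * K"
  shows "\<sigma> < sqrt x / K \<longleftrightarrow> c\<^sup>2 < x"
proof -
  have "\<sigma> < sqrt x / K \<longleftrightarrow> c < sqrt x" using assms by (simp add: pos_less_divide_eq)
  also have "\<dots> \<longleftrightarrow> sqrt (c\<^sup>2) < sqrt x" using assms by simp
  also have "\<dots> \<longleftrightarrow> c\<^sup>2 < x" by (rule real_sqrt_less_iff)
  finally show ?thesis .
qed

theorem lemma9p4:
  fixes M :: "'a measure" and W :: "real \<Rightarrow> 'a \<Rightarrow> real" and \<theta> :: "real \<Rightarrow> 'a \<Rightarrow> 'a"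
    and k :: nat and \<sigma> \<beta>s \<beta>n g :: real
  assumes BM: "two_sided_BM M W"
    and growth: "\<forall>\<omega>\<in>space M. ((\<lambda>t. W t \<omega> / t) \<longlongrightarrow> 0) at_top \<and> ((\<lambda>t. W t \<omega> / t) \<longlongrightarrow> 0) at_bot"
    and shift_meas: "\<forall>t. \<theta> t \<in> M \<rightarrow>\<^sub>M M"
    and shift: "\<forall>t s. \<forall>\<omega>\<in>space M. W s (\<theta> t \<omega>) = W (s + t) \<omega> - W t \<omega>"
    and k: "k \<ge> 2" and sigma_pos: "\<sigma> > 0"
    and g_def: "g = real k * \<beta>s - \<beta>n" and g_pos: "g > 0"
  shows
   "(integrable M (Mn W g (\<sigma> * (real k - 1))) \<longleftrightarrow> \<sigma> < sqrt (2 * g) / (real k - 1)) \<and>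
    (\<sigma> < sqrt (2 * g) / (real k - 1) \<longrightarrow>
       (\<integral>\<omega>. Mn W g (\<sigma> * (real k - 1)) \<omega> \<partial>M) = 1 / (g - (real k - 1)\<^sup>2 * \<sigma>\<^sup>2 / 2)) \<and>
    (integrable M (\<lambda>\<omega>. (Mn W g (\<sigma> * (real k - 1)) \<omega>)\<^sup>2) \<longleftrightarrow> \<sigma> < sqrt g / (real k - 1)) \<and>
    (\<sigma> < sqrt g / (real k - 1) \<longrightarrow>
       Var M (Mn W g (\<sigma> * (real k - 1))) =
         (real k - 1)\<^sup>2 * \<sigma>\<^sup>2 /
           (2 * (g - (real k - 1)\<^sup>2 * \<sigma>\<^sup>2 / 2)\<^sup>2 * (g - (real k - 1)\<^sup>2 * \<sigma>\<^sup>2))) \<and>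
    ((\<forall>s t. integrable M (\<lambda>\<omega>. Mn W g (\<sigma> * (real k - 1)) (\<theta> (s + t) \<omega>) *
                               Mn W g (\<sigma> * (real k - 1)) (\<theta> s \<omega>)))
       \<longleftrightarrow> \<sigma> < sqrt g / (real k - 1)) \<and>
    (\<sigma> < sqrt g / (real k - 1) \<longrightarrow>
       (\<forall>s t. Cov M (\<lambda>\<omega>. Mn W g (\<sigma> * (real k - 1)) (\<theta> (s + t) \<omega>))
                    (\<lambda>\<omega>. Mn W g (\<sigma> * (real k - 1)) (\<theta> s \<omega>))
               / Var M (Mn W g (\<sigma> * (real k - 1)))
             = exp (- (g - (real k - 1)\<^sup>2 * \<sigma>\<^sup>2 / 2) * \<bar>t\<bar>)))"
proof -
  define c where "c = \<sigma> * (real k - 1)"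
  have K: "real k - 1 > 0" using k by simp
  have c_pos: "c > 0" using K sigma_pos by (simp add: c_def)
  have c2: "(real k - 1)\<^sup>2 * \<sigma>\<^sup>2 = c\<^sup>2" by (simp add: c_def power_mult_distrib)
  interpret bm2 M W g c
    by (intro bm2.intro bm.intro bm2_axioms.intro BM c_pos g_pos) (use growth in blast)
  define a where "a = g - c\<^sup>2 / 2"
  define b where "b = g - c\<^sup>2"
  have c2nn: "c\<^sup>2 \<ge> 0" by simp
  have cond1: "\<sigma> < sqrt (2 * g) / (real k - 1) \<longleftrightarrow> a > 0"
    using sqrt_cond[OF c_pos K _ c_def, of "2 * g"] g_pos by (simp add: a_def mult.commute)
  have cond2: "\<sigma> < sqrt g / (real k - 1) \<longleftrightarrow> b > 0"
    using sqrt_cond[OF c_pos K _ c_def, of g] g_pos by (simp add: b_def)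
  have ba: "b > 0 \<Longrightarrow> a > 0" using c2nn unfolding a_def b_def by linarith
  have Mn0: "Mn W g c \<omega> = N 0 \<omega>" if "\<omega> \<in> space M" for \<omega>
    using W0[OF that] by (simp add: Mn_def N_def F_def)
  have MnS: "Mn W g c (\<theta> r \<omega>) = N r \<omega>" if "\<omega> \<in> space M" for \<omega> r
    using shift that by (simp add: Mn_def N_def F_def)
  have I1: "integrable M (Mn W g c) \<longleftrightarrow> a > 0"
  proof -
    have "integrable M (Mn W g c) \<longleftrightarrow> integrable M (N 0)" by (rule Bochner_Integration.integrable_cong) (simp_all add: Mn0)
    then show ?thesis using N_int_iff[of 0] by (simp add: a_def)
  qed
  have I2: "a > 0 \<Longrightarrow> (\<integral>\<omega>. Mn W g c \<omega> \<partial>M) = 1 / a"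
  proof -
    assume "a > 0"
    have "(\<integral>\<omega>. Mn W g c \<omega> \<partial>M) = (\<integral>\<omega>. N 0 \<omega> \<partial>M)" by (rule Bochner_Integration.integral_cong) (simp_all add: Mn0)
    then show ?thesis using N_integral[of 0] \<open>a > 0\<close> by (simp add: a_def)
  qed
  have I3: "integrable M (\<lambda>\<omega>. (Mn W g c \<omega>)\<^sup>2) \<longleftrightarrow> b > 0"
  proof -
    have "integrable M (\<lambda>\<omega>. (Mn W g c \<omega>)\<^sup>2) \<longleftrightarrow> integrable M (\<lambda>\<omega>. (N 0 \<omega>)\<^sup>2)" by (rule Bochner_Integration.integrable_cong) (simp_all add: Mn0)
    then show ?thesis using sq_int_iff[of 0] by (simp add: b_def)
  qed
  define V where "V = 1 / (a * b) - 1 / a\<^sup>2"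
  have Jv0: "Jv 0 = 1 / (a * b)" unfolding Jv_def a_def b_def by simp
  have I4: "b > 0 \<Longrightarrow> Var M (Mn W g c) = V"
  proof -
    assume b0: "b > 0"
    have a0: "a > 0" using ba b0 .
    have "Var M (Mn W g c) = Var M (N 0)" by (rule Var_cong) (simp add: Mn0)
    also have "\<dots> = (\<integral>\<omega>. (N 0 \<omega>)\<^sup>2 \<partial>M) - (\<integral>\<omega>. N 0 \<omega> \<partial>M)\<^sup>2"
      by (rule Var_eq[OF ps]) (use N_int_iff[of 0] sq_int_iff[of 0] a0 b0 in \<open>simp_all add: a_def b_def\<close>)
    also have "\<dots> = V"
      using N_sq_integral[of 0] N_integral[of 0] a0 b0 Jv0 by (simp add: V_def a_def b_def power_divide)
    finally show ?thesis .
  qed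
  have Vval: "b > 0 \<Longrightarrow> V = c\<^sup>2 / (2 * (g - c\<^sup>2 / 2)\<^sup>2 * (g - c\<^sup>2))"
  proof -
    assume b0: "b > 0"
    have a0: "a > 0" using ba b0 .
    have ab: "a - b = c\<^sup>2 / 2" unfolding a_def b_def by simp
    have "V = (a - b) / (a\<^sup>2 * b)" unfolding V_def using a0 b0 by (simp add: field_simps power2_eq_square)
    also have "\<dots> = c\<^sup>2 / (2 * a\<^sup>2 * b)" unfolding ab by simp
    finally show ?thesis unfolding a_def b_def .
  qed
  have Vpos: "b > 0 \<Longrightarrow> V > 0"
  proof -
    assume b0: "b > 0"
    have a0: "a > 0" using ba b0 .
    have "b < a" unfolding a_def b_def using c_pos by simp
    then have "a * b < a\<^sup>2" using a0 b0 by (simp add: power2_eq_square)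
    then have "1 / a\<^sup>2 < 1 / (a * b)" using a0 b0 by (intro divide_strict_left_mono) auto
    then show ?thesis unfolding V_def by simp
  qed
  have I5: "(\<forall>s t. integrable M (\<lambda>\<omega>. Mn W g c (\<theta> (s + t) \<omega>) * Mn W g c (\<theta> s \<omega>))) \<longleftrightarrow> b > 0"
  proof
    assume H: "\<forall>s t. integrable M (\<lambda>\<omega>. Mn W g c (\<theta> (s + t) \<omega>) * Mn W g c (\<theta> s \<omega>))"
    have "integrable M (\<lambda>\<omega>. Mn W g c (\<theta> (0 + 0) \<omega>) * Mn W g c (\<theta> 0 \<omega>))" using H by blast
    moreover have "integrable M (\<lambda>\<omega>. Mn W g c (\<theta> (0 + 0) \<omega>) * Mn W g c (\<theta> 0 \<omega>)) \<longleftrightarrow> integrable M (\<lambda>\<omega>. (N 0 \<omega>)\<^sup>2)"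
      by (rule Bochner_Integration.integrable_cong) (simp_all add: MnS power2_eq_square)
    ultimately have "integrable M (\<lambda>\<omega>. (N 0 \<omega>)\<^sup>2)" by simp
    then show "b > 0" using sq_int_iff[of 0] by (simp add: b_def)
  next
    assume b0: "b > 0"
    show "\<forall>s t. integrable M (\<lambda>\<omega>. Mn W g c (\<theta> (s + t) \<omega>) * Mn W g c (\<theta> s \<omega>))"
    proof (intro allI)
      fix s t
      have "integrable M (\<lambda>\<omega>. N (s + t) \<omega> * N s \<omega>)" using EPP[of "s + t" s] b0 by (simp add: b_def)
      moreover have "integrable M (\<lambda>\<omega>. Mn W g c (\<theta> (s + t) \<omega>) * Mn W g c (\<theta> s \<omega>)) \<longleftrightarrow> integrable M (\<lambda>\<omega>. N (s + t) \<omega> * N s \<omega>)"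
        by (rule Bochner_Integration.integrable_cong) (simp_all add: MnS)
      ultimately show "integrable M (\<lambda>\<omega>. Mn W g c (\<theta> (s + t) \<omega>) * Mn W g c (\<theta> s \<omega>))" by simp
    qed
  qed
  have I6: "b > 0 \<Longrightarrow> Cov M (\<lambda>\<omega>. Mn W g c (\<theta> (s + t) \<omega>)) (\<lambda>\<omega>. Mn W g c (\<theta> s \<omega>)) / Var M (Mn W g c)
      = exp (- a * \<bar>t\<bar>)" for s t
  proof -
    assume b0: "b > 0"
    have a0: "a > 0" using ba b0 .
    have "Cov M (\<lambda>\<omega>. Mn W g c (\<theta> (s + t) \<omega>)) (\<lambda>\<omega>. Mn W g c (\<theta> s \<omega>)) = Cov M (N (s + t)) (N s)"
      by (rule Cov_cong) (simp_all add: MnS)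
    also have "\<dots> = Jv \<bar>t\<bar> - 1 / a * (1 / a)"
      unfolding Cov_def using EPP[of "s + t" s] N_integral[of "s + t"] N_integral[of s] a0 b0
      by (simp add: a_def b_def)
    also have "\<dots> = exp (- a * \<bar>t\<bar>) * V"
      unfolding Jv_def V_def a_def[symmetric] b_def[symmetric] using a0 b0
      by (simp add: field_simps power2_eq_square)
    finally show ?thesis using I4[OF b0] Vpos[OF b0] by simp
  qed
  show ?thesis
    unfolding c_def[symmetric] c2
    using cond1 cond2 I1 I2 I3 I4 Vval I5 I6 unfolding a_def b_def
    by (auto simp del: power_mult_distrib)
qed


end
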